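(* Uniformly in real $y \geq 1$ and positive integers $k$, \[ \sum_{\substack{d \leq y\\ (d,k) = 1}} \frac{\mu(d)\,t(d)^2}{d} = 1+o(1), \qquad x \to \infty.\]
   Context: $\mu$ is the Möbius function. Let $x$ be large and $\lambda = \sqrt{\log x \log\log x}$. Define the multiplicative function $r$ by $r(p) = \frac{\lambda}{\sqrt{p}\log p}$ for primes $\lambda^2 \le p \le \exp((\log\lambda)^2)$, $r(p)=0$ for other primes, and $r(p^n)=0$ for $n\ge2$. Define the multiplicative function $t$ by $t(p^n) = \frac{r(p^n)}{1+r(p^n)^2}$. *)

theory Defs
  imports "HOL-Computational_Algebra.Computational_Algebra"
begin

definition moebius_mu :: "nat \<Rightarrow> real" where
  "moebius_mu n = (if n = 0 then 0
     else if squarefree n then (-1) ^ card (prime_factors n) else 0)"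

definition lam :: "real \<Rightarrow> real" where
  "lam x = sqrt (ln x * ln (ln x))"

text \<open>Values of r on prime powers p^m (m >= 1).\<close>
definition r_pp :: "real \<Rightarrow> nat \<Rightarrow> nat \<Rightarrow> real" where
  "r_pp x p m = (if m = 1 \<and> (lam x)^2 \<le> real p \<and> real p \<le> exp ((ln (lam x))^2)
                 then lam x / (sqrt (real p) * ln (real p)) else 0)"

definition r_fun :: "real \<Rightarrow> nat \<Rightarrow> real" where
  "r_fun x n = (if n = 0 then 0
     else (\<Prod>p\<in>prime_factors n. r_pp x p (multiplicity p n)))"

definition t_fun :: "real \<Rightarrow> nat \<Rightarrow> real" where
  "t_fun x n = (if n = 0 then 0
     else (\<Prod>p\<in>prime_factors n.
              r_pp x p (multiplicity p n) / (1 + (r_pp x p (multiplicity p n))^2)))"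

end

theory Submission
  imports Defs "HOL-Real_Asymp.Real_Asymp"
begin

lemma mu_abs: "\<bar>moebius_mu n\<bar> \<le> 1"
  by (simp add: moebius_mu_def)

lemma tq_le: "(r/(1+r^2))^2 \<le> (r::real)^2"
proof -
  have "1 \<le> 1 + r^2" by simp
  hence "(1+r^2)^2 \<ge> 1" by (simp add: one_le_power)
  hence "r^2 / (1+r^2)^2 \<le> r^2"
    by (simp add: divide_le_eq mult_le_cancel_left1)
  thus ?thesis by (simp add: power_divide)
qed

lemma sqf_prod:
  assumes "(d::nat) \<ge> 1" "squarefree d"
  shows "d = (\<Prod>p\<in>prime_factors d. p)"
proof -
  have m: "\<forall>p\<in>prime_factors d. multiplicity p d = 1"
    using assms(2) squarefree_factorial_semiring'[of d] assms(1) by (metis not_one_le_zero)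
  have "(\<Prod>p\<in>prime_factors d. p ^ multiplicity p d) = d"
    using prod_prime_factors[of d] assms by simp
  moreover have "(\<Prod>p\<in>prime_factors d. p ^ multiplicity p d) = (\<Prod>p\<in>prime_factors d. p)"
    using m by (intro prod.cong) auto
  ultimately show ?thesis by simp
qed

lemma term_bound:
  assumes "(d::nat) \<ge> 1"
  shows "\<bar>moebius_mu d * (t_fun x d)^2 / real d\<bar>
           \<le> (\<Prod>p\<in>prime_factors d. (r_pp x p 1)^2 / real p)"
proof (cases "squarefree d")
  case False
  then have "moebius_mu d = 0" by (simp add: moebius_mu_def)
  then show ?thesis by (auto intro!: prod_nonneg)
next
  case True
  have m: "\<forall>p\<in>prime_factors d. multiplicity p d = 1"
    using True squarefree_factorial_semiring'[of d] assms by (metis not_one_le_zero)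
  have d0: "d \<noteq> 0" using assms by simp
  have t: "t_fun x d = (\<Prod>p\<in>prime_factors d. r_pp x p 1 / (1 + (r_pp x p 1)^2))"
    using d0 unfolding t_fun_def if_not_P[OF d0] using m by (intro prod.cong refl) simp
  have dd: "real d = (\<Prod>p\<in>prime_factors d. real p)"
  proof -
    have "real d = real (\<Prod>p\<in>prime_factors d. p)"
      using sqf_prod[OF assms True] by (rule arg_cong)
    also have "\<dots> = (\<Prod>p\<in>prime_factors d. real p)" by (rule of_nat_prod)
    finally show ?thesis .
  qed
  have "(t_fun x d)^2 / real d
      = (\<Prod>p\<in>prime_factors d. (r_pp x p 1 / (1 + (r_pp x p 1)^2))^2) / (\<Prod>p\<in>prime_factors d. real p)"
    unfolding t dd by (simp only: prod_power_distrib)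
  also have "\<dots> = (\<Prod>p\<in>prime_factors d. (r_pp x p 1 / (1 + (r_pp x p 1)^2))^2 / real p)"
    by (rule prod_dividef[symmetric])
  also have "\<dots> \<le> (\<Prod>p\<in>prime_factors d. (r_pp x p 1)^2 / real p)"
  proof (rule prod_mono)
    fix p assume "p \<in> prime_factors d"
    show "0 \<le> (r_pp x p 1 / (1 + (r_pp x p 1)^2))^2 / real p \<and>
          (r_pp x p 1 / (1 + (r_pp x p 1)^2))^2 / real p \<le> (r_pp x p 1)^2 / real p"
      using tq_le[of "r_pp x p 1"] by (simp add: divide_right_mono)
  qed
  finally have A: "(t_fun x d)^2 / real d \<le> (\<Prod>p\<in>prime_factors d. (r_pp x p 1)^2 / real p)" .
  have "\<bar>moebius_mu d * (t_fun x d)^2 / real d\<bar> = \<bar>moebius_mu d\<bar> * ((t_fun x d)^2 / real d)"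
    by (simp add: abs_mult)
  also have "\<dots> \<le> 1 * ((t_fun x d)^2 / real d)"
    by (intro mult_right_mono mu_abs) auto
  finally show ?thesis using A by simp
qed


lemma tele:
  assumes "2 \<le> m" "m - 1 \<le> N"
  shows "(\<Sum>n\<in>{m..N}. 1/(real n)^2) \<le> 1/(real m - 1) - 1/real N"
  using assms(2)
proof (induct N rule: dec_induct)
  case base
  have "{m..m-1} = {}" using assms(1) by auto
  moreover have "real (m - 1) = real m - 1" using assms(1) by simp
  ultimately show ?case by simp
next
  case (step N)
  have N1: "N \<ge> 1" using step assms(1) by simp
  have e: "{m..Suc N} = insert (Suc N) {m..N}" using step assms(1) by auto
  have "1/(real (Suc N))^2 \<le> 1/real N - 1/real (Suc N)"
  proof -
    have "1/real N - 1/real (Suc N) = 1/(real N * real (Suc N))"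
      using N1 by (simp add: field_simps)
    also have "\<dots> \<ge> 1/(real (Suc N))^2"
      using N1 by (intro divide_left_mono) (auto simp: power2_eq_square intro!: mult_pos_pos)
    finally show ?thesis .
  qed
  then show ?case using step(3) unfolding e by simp
qed

lemma a_single:
  assumes L: "(lam x)^2 \<ge> 2" and p: "(lam x)^2 \<le> real p"
  shows "(r_pp x p 1)^2 / real p \<le> (lam x)^2 / (ln ((lam x)^2))^2 * (1/(real p)^2)"
proof (cases "(lam x)^2 \<le> real p \<and> real p \<le> exp ((ln (lam x))^2)")
  case False
  then have "r_pp x p 1 = 0" unfolding r_pp_def by auto
  then show ?thesis by simp
next
  case True
  have p0: "real p > 0" using L p by simp
  have lnL: "ln ((lam x)^2) > 0" using L by (intro ln_gt_zero) linarith
  have lnp: "ln ((lam x)^2) \<le> ln (real p)" using L p ln_le_cancel_iff[of "(lam x)^2" "real p"] by linarith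
  have "(r_pp x p 1)^2 / real p = (lam x)^2 / (real p * (ln (real p))^2) / real p"
    using True p0 unfolding r_pp_def by (simp add: power_divide power_mult_distrib)
  also have "\<dots> = (lam x)^2 / (ln (real p))^2 * (1/(real p)^2)"
    by (simp add: field_simps power2_eq_square)
  also have "\<dots> \<le> (lam x)^2 / (ln ((lam x)^2))^2 * (1/(real p)^2)"
    using lnL lnp by (intro mult_right_mono divide_left_mono power_mono mult_pos_pos) auto
  finally show ?thesis .
qed

lemma sum_a_bound:
  assumes L: "(lam x)^2 \<ge> 2" and fin: "finite P" and P: "\<forall>p\<in>P. (lam x)^2 \<le> real p"
  shows "(\<Sum>p\<in>P. (r_pp x p 1)^2 / real p) \<le> 2 / (ln ((lam x)^2))^2"
proof -
  define L where "L = (lam x)^2"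
  define m where "m = nat \<lceil>L\<rceil>"
  define N where "N = Max (insert m P)"
  have L2: "L \<ge> 2" using L L_def by simp
  have mL: "real m \<ge> L" unfolding m_def using L2 by linarith
  have m2: "m \<ge> 2" using mL L2 by linarith
  have sub: "P \<subseteq> {m..N}"
  proof
    fix p assume "p \<in> P"
    then have "L \<le> real p" using P L_def by simp
    then have "m \<le> p" unfolding m_def by (simp add: nat_le_iff ceiling_le_iff)
    moreover have "p \<le> N" unfolding N_def using fin \<open>p \<in> P\<close> by simp
    ultimately show "p \<in> {m..N}" by simp
  qed
  have mN: "m - 1 \<le> N" unfolding N_def using fin by (simp add: le_diff_conv) (meson Max_ge finite_insert insertI1 le_SucI)
  have lnL: "ln L > 0" using L2 by (intro ln_gt_zero) linarith
  have "(\<Sum>p\<in>P. (r_pp x p 1)^2 / real p) \<le> (\<Sum>p\<in>P. L / (ln L)^2 * (1/(real p)^2))"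
    using a_single[OF L] P L_def by (intro sum_mono) auto
  also have "\<dots> = L / (ln L)^2 * (\<Sum>p\<in>P. 1/(real p)^2)" by (simp add: sum_distrib_left)
  also have "\<dots> \<le> L / (ln L)^2 * (\<Sum>n\<in>{m..N}. 1/(real n)^2)"
    using sub L2 by (intro mult_left_mono sum_mono2) auto
  also have "\<dots> \<le> L / (ln L)^2 * (1/(real m - 1))"
  proof -
    have "(\<Sum>n\<in>{m..N}. 1/(real n)^2) \<le> 1/(real m - 1) - 1/real N" by (rule tele[OF m2 mN])
    also have "\<dots> \<le> 1/(real m - 1)" by simp
    finally show ?thesis using L2 by (intro mult_left_mono) auto
  qed
  also have "\<dots> \<le> L / (ln L)^2 * (1/(L - 1))"
    using mL L2 by (intro mult_left_mono divide_left_mono) auto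
  also have "\<dots> = (L/(L-1)) / (ln L)^2" by simp
  also have "\<dots> \<le> 2 / (ln L)^2"
    using L2 lnL by (intro divide_right_mono) (auto simp: divide_le_eq)
  finally show ?thesis unfolding L_def .
qed


lemma total_bound:
  assumes L: "(lam x)^2 \<ge> 2" and finD: "finite D" and D2: "\<forall>d\<in>D. d \<ge> (2::nat)"
  shows "(\<Sum>d\<in>D. \<bar>moebius_mu d * (t_fun x d)^2 / real d\<bar>) \<le> exp (2 / (ln ((lam x)^2))^2) - 1"
proof -
  define a where "a p = (r_pp x p 1)^2 / real p" for p :: nat
  define g where "g S = (\<Prod>p\<in>S. a p)" for S
  define P where "P = {p::nat. (lam x)^2 \<le> real p \<and> real p \<le> exp ((ln (lam x))^2)}"
  define D' where "D' = {d\<in>D. squarefree d}"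
  define f where "f d = \<bar>moebius_mu d * (t_fun x d)^2 / real d\<bar>" for d
  have a0: "a p \<ge> 0" for p unfolding a_def by simp
  have g0: "g S \<ge> 0" for S unfolding g_def using a0 by (simp add: prod_nonneg)
  have finP: "finite P"
  proof (rule finite_subset)
    show "P \<subseteq> {..nat \<lceil>exp ((ln (lam x))^2)\<rceil>}" unfolding P_def by (auto simp: le_nat_iff le_ceiling_iff)
  qed simp
  have aout: "a p = 0" if "p \<notin> P" for p using that unfolding a_def P_def r_pp_def by auto
  have finD': "finite D'" using finD unfolding D'_def by simp
  have "(\<Sum>d\<in>D. f d) = (\<Sum>d\<in>D'. f d)"
  proof (rule sum.mono_neutral_right[OF finD])
    show "D' \<subseteq> D" unfolding D'_def by auto
    show "\<forall>i\<in>D - D'. f i = 0" unfolding D'_def f_def moebius_mu_def by auto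
  qed
  also have "\<dots> \<le> (\<Sum>d\<in>D'. g (prime_factors d))"
    unfolding f_def g_def a_def using D2 D'_def by (intro sum_mono term_bound) auto
  also have "\<dots> = (\<Sum>S\<in>prime_factors ` D'. g S)"
  proof -
    have "inj_on prime_factors D'"
    proof
      fix d1 d2 assume "d1 \<in> D'" "d2 \<in> D'" "prime_factors d1 = prime_factors d2"
      then show "d1 = d2" using sqf_prod[of d1] sqf_prod[of d2] D2 unfolding D'_def by force
    qed
    then show ?thesis by (simp add: sum.reindex)
  qed
  also have "\<dots> = (\<Sum>S\<in>prime_factors ` D' \<inter> Pow P. g S)"
  proof (rule sum.mono_neutral_right)
    show "finite (prime_factors ` D')" using finD' by simp
    show "\<forall>S\<in>prime_factors ` D' - prime_factors ` D' \<inter> Pow P. g S = 0"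
    proof
      fix S assume S: "S \<in> prime_factors ` D' - prime_factors ` D' \<inter> Pow P"
      then obtain p where "p \<in> S" "p \<notin> P" by auto
      moreover have "finite S" using S by auto
      ultimately show "g S = 0" unfolding g_def using aout by (intro prod_zero) auto
    qed
  qed auto
  also have "\<dots> \<le> (\<Sum>S\<in>Pow P - {{}}. g S)"
  proof (rule sum_mono2)
    show "finite (Pow P - {{}})" using finP by simp
    show "prime_factors ` D' \<inter> Pow P \<subseteq> Pow P - {{}}"
    proof
      fix S assume "S \<in> prime_factors ` D' \<inter> Pow P"
      then obtain d where d: "d \<in> D'" "S = prime_factors d" "S \<subseteq> P" by auto
      have "d \<ge> 2" using d D2 unfolding D'_def by auto
      then have "prime_factors d \<noteq> {}"
        using prime_factorization_empty_iff[of d] by auto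
      then show "S \<in> Pow P - {{}}" using d by auto
    qed
  qed (use g0 in auto)
  also have "\<dots> = (\<Sum>S\<in>Pow P. g S) - g {}"
    using finP by (simp add: sum_diff1)
  also have "(\<Sum>S\<in>Pow P. g S) = (\<Prod>p\<in>P. a p + 1)"
    using prod_add[OF finP, of a "\<lambda>_. 1"] unfolding g_def by simp
  also have "g {} = 1" unfolding g_def by simp
  also have "(\<Prod>p\<in>P. a p + 1) \<le> (\<Prod>p\<in>P. exp (a p))"
    using a0 by (intro prod_mono) (auto simp: add.commute[of _ 1])
  also have "\<dots> = exp (\<Sum>p\<in>P. a p)" using finP by (simp add: exp_sum)
  also have "\<dots> \<le> exp (2 / (ln ((lam x)^2))^2)"
    unfolding a_def using sum_a_bound[OF L finP] P_def by simp
  finally show ?thesis unfolding f_def by simp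
qed


theorem mainTheorem13:
  shows "\<forall>\<epsilon>>0. \<forall>\<^sub>F x in at_top. \<forall>(y::real)\<ge>1. \<forall>k::nat. k \<ge> 1 \<longrightarrow>
     \<bar>(\<Sum>d\<in>{d::nat. 1 \<le> d \<and> real d \<le> y \<and> coprime d k}.
         moebius_mu d * (t_fun x d)^2 / real d) - 1\<bar> \<le> \<epsilon>"
proof (intro allI impI)
  fix \<epsilon> :: real assume e: "\<epsilon> > 0"
  have lim: "((\<lambda>x::real. exp (2/(ln (ln x * ln (ln x)))^2) - 1) \<longlongrightarrow> 0) at_top" by real_asymp
  have ev1: "\<forall>\<^sub>F x in at_top. exp (2/(ln (ln x * ln (ln x)))^2) - 1 < \<epsilon>"
    using order_tendstoD(2)[OF lim e] .
  have fl: "filterlim (\<lambda>x::real. ln x * ln (ln x)) at_top at_top" by real_asymp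
  have ev2: "\<forall>\<^sub>F x in at_top. (2::real) \<le> ln x * ln (ln x)"
    using fl unfolding filterlim_at_top by blast
  show "\<forall>\<^sub>F x in at_top. \<forall>(y::real)\<ge>1. \<forall>k::nat. k \<ge> 1 \<longrightarrow>
     \<bar>(\<Sum>d\<in>{d::nat. 1 \<le> d \<and> real d \<le> y \<and> coprime d k}.
         moebius_mu d * (t_fun x d)^2 / real d) - 1\<bar> \<le> \<epsilon>"
    using ev1 ev2
  proof eventually_elim
    case (elim x)
    have lam2: "(lam x)^2 = ln x * ln (ln x)" unfolding lam_def using elim(2) by simp
    have L: "(lam x)^2 \<ge> 2" using lam2 elim(2) by simp
    have bnd: "exp (2 / (ln ((lam x)^2))^2) - 1 \<le> \<epsilon>" using lam2 elim(1) by simp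
    show ?case
    proof (intro allI impI)
      fix y :: real and k :: nat assume y: "y \<ge> 1" and k: "k \<ge> 1"
      define D where "D = {d::nat. 1 \<le> d \<and> real d \<le> y \<and> coprime d k}"
      define h where "h d = moebius_mu d * (t_fun x d)^2 / real d" for d
      have finD: "finite D"
      proof (rule finite_subset)
        show "D \<subseteq> {..nat \<lceil>y\<rceil>}" unfolding D_def by (auto simp: le_nat_iff le_ceiling_iff)
      qed simp
      have oneD: "1 \<in> D" unfolding D_def using y by simp
      have h1: "h 1 = 1" unfolding h_def moebius_mu_def t_fun_def by simp
      have "(\<Sum>d\<in>D. h d) = h 1 + (\<Sum>d\<in>D - {1}. h d)"
        using finD oneD by (simp add: sum.remove)
      hence "\<bar>(\<Sum>d\<in>D. h d) - 1\<bar> = \<bar>\<Sum>d\<in>D - {1}. h d\<bar>" using h1 by simp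
      also have "\<dots> \<le> (\<Sum>d\<in>D - {1}. \<bar>h d\<bar>)" by (rule sum_abs)
      also have "\<dots> \<le> exp (2 / (ln ((lam x)^2))^2) - 1"
        unfolding h_def
        by (rule total_bound[OF L]) (use finD D_def in auto)
      finally show "\<bar>(\<Sum>d\<in>{d::nat. 1 \<le> d \<and> real d \<le> y \<and> coprime d k}.
         moebius_mu d * (t_fun x d)^2 / real d) - 1\<bar> \<le> \<epsilon>"
        using bnd unfolding D_def h_def by simp
    qed
  qed
qed

end
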